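(* Let $\mathbb{K}\in\{\mathbb{R},\mathbb{C}\}$ and let $X$ be an infinite-dimensional normed vector space over $\mathbb{K}$. Let $U\neq\emptyset$ be a convex open subset of $X$ and let $L$ be a linear subspace of $X$ with $\operatorname{codim} L\geq 2$. Then $U\setminus L$ is dense in $U$ and pathwise connected.
   Context: $\operatorname{codim} L$ denotes the (possibly finite, possibly infinite cardinal) algebraic codimension of $L$ in $X$: $\operatorname{codim} L=\kappa$ iff some Hamel basis $B$ of $X$ has a subset $B'$ with $\operatorname{span}(B')=L$ and $|B\setminus B'|=\kappa$. Topological notions refer to the norm topology. *)

theory Defs
  imports "HOL-Analysis.Analysis"
begin

text \<open>A scalar multiplication by the field 'k on a real normed vector space that makes it a
  normed vector space over 'k, compatible with the given real structure. For 'k = complex this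
  is exactly a complex normed vector space structure (the complex normed space viewed, as
  usual, also as a real normed space).\<close>
definition normed_scaling :: "('k::real_normed_field \<Rightarrow> 'a::real_normed_vector \<Rightarrow> 'a) \<Rightarrow> bool" where
  "normed_scaling sc \<longleftrightarrow> vector_space sc
     \<and> (\<forall>r x. sc (of_real r) x = scaleR r x)
     \<and> (\<forall>c x. norm (sc c x) = norm c * norm x)"

text \<open>Finite-dimensionality over the scalar field given by sc.\<close>
definition fin_dim :: "('k::field \<Rightarrow> 'a::ab_group_add \<Rightarrow> 'a) \<Rightarrow> bool" where
  "fin_dim sc \<longleftrightarrow> (\<exists>S. finite S \<and> module.span sc S = UNIV)"

text \<open>Algebraic codimension of L is at least 2: some Hamel basis B has a subset B' spanning L
  with at least two elements of B outside B'.\<close>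
definition codim_ge2 :: "('k::field \<Rightarrow> 'a::ab_group_add \<Rightarrow> 'a) \<Rightarrow> 'a set \<Rightarrow> bool" where
  "codim_ge2 sc L \<longleftrightarrow> (\<exists>B B'. \<not> module.dependent sc B \<and> module.span sc B = UNIV
      \<and> B' \<subseteq> B \<and> module.span sc B' = L
      \<and> (\<exists>b1 b2. b1 \<in> B - B' \<and> b2 \<in> B - B' \<and> b1 \<noteq> b2))"

end

theory Submission
  imports Defs
begin


lemma codim_pair:
  assumes vs: "vector_space sc" and cd: "codim_ge2 sc L"
  shows "\<exists>b1 b2. \<forall>c1 c2. sc c1 b1 + sc c2 b2 \<in> L \<longrightarrow> c1 = 0 \<and> c2 = 0"
proof -
  interpret vector_space sc by (rule vs)
  obtain B B' b1 b2 where ind: "\<not> dependent B" and sub: "B' \<subseteq> B" and L: "span B' = L"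
    and b: "b1 \<in> B - B'" "b2 \<in> B - B'" "b1 \<noteq> b2"
    using cd unfolding codim_ge2_def by blast
  have key: "c = 0" if h: "sc c u + sc d v \<in> L" and u: "u \<in> B - B'" and v: "v \<in> B - B'" "u \<noteq> v"
    for c d u v
  proof (rule ccontr)
    assume c: "c \<noteq> 0"
    have "span B' \<subseteq> span (B - {u})" using sub u by (intro span_mono) auto
    hence l: "sc c u + sc d v \<in> span (B - {u})" using h L by auto
    have "v \<in> span (B - {u})" using v by (intro span_base) auto
    hence "sc d v \<in> span (B - {u})" by (rule span_scale)
    hence "sc c u \<in> span (B - {u})" using l span_diff by fastforce
    hence "sc (inverse c) (sc c u) \<in> span (B - {u})" by (rule span_scale)
    hence "u \<in> span (B - {u})" using c by simp
    thus False using ind u unfolding dependent_def by blast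
  qed
  show ?thesis
  proof (intro exI allI impI conjI)
    fix c1 c2 assume h: "sc c1 b1 + sc c2 b2 \<in> L"
    show "c1 = 0" using key[OF h] b by blast
    have "sc c2 b2 + sc c1 b1 \<in> L" using h by (simp add: add.commute)
    show "c2 = 0" using key[OF \<open>sc c2 b2 + sc c1 b1 \<in> L\<close>] b by blast
  qed
qed

lemma good_dir:
  fixes L :: "'a::real_normed_vector set"
  assumes L: "subspace L" and pair: "\<forall>c1 c2. c1 *\<^sub>R b1 + c2 *\<^sub>R b2 \<in> L \<longrightarrow> c1 = 0 \<and> c2 = 0"
    and x: "x \<notin> L"
  shows "\<exists>w\<in>{b1,b2}. \<forall>a b. a *\<^sub>R x + b *\<^sub>R w \<in> L \<longrightarrow> a = 0 \<and> b = 0"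
proof (rule ccontr)
  assume "\<not> ?thesis"
  then obtain a1 c1 a2 c2 where h1: "a1 *\<^sub>R x + c1 *\<^sub>R b1 \<in> L" "\<not> (a1 = 0 \<and> c1 = 0)"
    and h2: "a2 *\<^sub>R x + c2 *\<^sub>R b2 \<in> L" "\<not> (a2 = 0 \<and> c2 = 0)" by blast
  have xa: "a = 0" if "a *\<^sub>R x \<in> L" for a
  proof (rule ccontr)
    assume "a \<noteq> 0"
    hence "x = inverse a *\<^sub>R (a *\<^sub>R x)" by simp
    thus False using that x L subspace_scale by metis
  qed
  have c1: "c1 \<noteq> 0" using h1 xa by auto
  have c2: "c2 \<noteq> 0" using h2 xa by auto
  have a1: "a1 \<noteq> 0"
  proof
    assume "a1 = 0"
    hence "c1 *\<^sub>R b1 + 0 *\<^sub>R b2 \<in> L" using h1 by simp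
    thus False using pair c1 by blast
  qed
  have "a2 *\<^sub>R (a1 *\<^sub>R x + c1 *\<^sub>R b1) - a1 *\<^sub>R (a2 *\<^sub>R x + c2 *\<^sub>R b2) \<in> L"
    using h1 h2 L by (intro subspace_diff subspace_scale) auto
  moreover have "a2 *\<^sub>R (a1 *\<^sub>R x + c1 *\<^sub>R b1) - a1 *\<^sub>R (a2 *\<^sub>R x + c2 *\<^sub>R b2)
      = (a2 * c1) *\<^sub>R b1 + (- (a1 * c2)) *\<^sub>R b2"
    by (simp add: algebra_simps)
  ultimately have "a2 * c1 = 0 \<and> - (a1 * c2) = 0" using pair by metis
  thus False using a1 c2 by simp
qed


lemma near_line:
  fixes U :: "'a::real_normed_vector set"
  assumes "open U" "x \<in> U" "w \<noteq> 0"
  shows "\<exists>e>0. \<forall>t. 0 \<le> t \<and> t \<le> e \<longrightarrow> x + t *\<^sub>R w \<in> U"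
proof -
  obtain r where r: "r > 0" "ball x r \<subseteq> U" using assms open_contains_ball by blast
  have nw: "norm w > 0" using assms by simp
  show ?thesis
  proof (intro exI conjI allI impI)
    show "r / (2 * norm w) > 0" using r nw by simp
    fix t assume t: "0 \<le> t \<and> t \<le> r / (2 * norm w)"
    have "norm (t *\<^sub>R w) = t * norm w" using t by simp
    also have "\<dots> \<le> r / (2 * norm w) * norm w" using t nw by (intro mult_right_mono) auto
    also have "\<dots> = r / 2" using nw by simp
    finally have "dist x (x + t *\<^sub>R w) < r" using r by (simp add: dist_norm)
    thus "x + t *\<^sub>R w \<in> U" using r by auto
  qed
qed

lemma core:
  fixes U L :: "'a::real_normed_vector set"
  assumes cU: "convex U" and oU: "open U" and L: "subspace L"
    and pair: "\<forall>c1 c2. c1 *\<^sub>R b1 + c2 *\<^sub>R b2 \<in> L \<longrightarrow> c1 = 0 \<and> c2 = 0"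
  shows "U \<subseteq> closure (U - L) \<and> path_connected (U - L)"
proof
  have L0: "0 \<in> L" using L subspace_0 by blast
  have b1: "b1 \<noteq> 0"
  proof
    assume "b1 = 0" hence "1 *\<^sub>R b1 + 0 *\<^sub>R b2 \<in> L" using L0 by simp
    thus False using pair by fastforce
  qed
  have b2: "b2 \<noteq> 0"
  proof
    assume "b2 = 0" hence "0 *\<^sub>R b1 + 1 *\<^sub>R b2 \<in> L" using L0 by simp
    thus False using pair by fastforce
  qed
  show "U \<subseteq> closure (U - L)"
  proof
    fix x assume x: "x \<in> U"
    show "x \<in> closure (U - L)"
    proof (cases "x \<in> L")
      case False thus ?thesis using x closure_subset by blast
    next
      case True
      obtain e0 where e0: "e0 > 0" "\<forall>t. 0 \<le> t \<and> t \<le> e0 \<longrightarrow> x + t *\<^sub>R b1 \<in> U"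
        using near_line[OF oU x b1] by blast
      have nb: "norm b1 > 0" using b1 by simp
      show ?thesis unfolding closure_approachable
      proof (intro allI impI)
        fix e :: real assume e: "e > 0"
        define t where "t = min e0 (e / (2 * norm b1))"
        have t: "t > 0" "t \<le> e0" "t \<le> e / (2 * norm b1)" using e e0 nb by (auto simp: t_def)
        have inU: "x + t *\<^sub>R b1 \<in> U" using e0 t by auto
        have nL: "x + t *\<^sub>R b1 \<notin> L"
        proof
          assume "x + t *\<^sub>R b1 \<in> L"
          hence "(x + t *\<^sub>R b1) - x \<in> L" using True L subspace_diff by blast
          hence "t *\<^sub>R b1 + 0 *\<^sub>R b2 \<in> L" by simp
          thus False using pair t by fastforce
        qed
        have "dist (x + t *\<^sub>R b1) x = t * norm b1" using t by (simp add: dist_norm)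
        also have "\<dots> \<le> e / (2 * norm b1) * norm b1" using t nb by (intro mult_right_mono) auto
        also have "\<dots> < e" using nb e by simp
        finally show "\<exists>y\<in>U - L. dist y x < e" using inU nL by blast
      qed
    qed
  qed
  show "path_connected (U - L)"
    unfolding path_connected_component
  proof (intro ballI)
    fix x y assume x: "x \<in> U - L" and y: "y \<in> U - L"
    show "path_component (U - L) x y"
    proof (cases "closed_segment x y \<subseteq> U - L")
      case True thus ?thesis by (rule path_component_linepath)
    next
      case False
      have "closed_segment x y \<subseteq> U" using x y cU closed_segment_subset by blast
      with False obtain z where z: "z \<in> closed_segment x y" "z \<in> L" by blast
      then obtain s0 where s0: "0 \<le> s0" "s0 \<le> 1" "z = (1 - s0) *\<^sub>R x + s0 *\<^sub>R y"
        unfolding closed_segment_def by blast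
      obtain w where w: "w \<in> {b1, b2}" and good: "\<forall>a b. a *\<^sub>R x + b *\<^sub>R w \<in> L \<longrightarrow> a = 0 \<and> b = 0"
        using good_dir[OF L pair] x by blast
      have w0: "w \<noteq> 0" using w b1 b2 by auto
      obtain e1 where e1: "e1 > 0" "\<forall>t. 0 \<le> t \<and> t \<le> e1 \<longrightarrow> x + t *\<^sub>R w \<in> U"
        using near_line[OF oU _ w0, of x] x by blast
      obtain e2 where e2: "e2 > 0" "\<forall>t. 0 \<le> t \<and> t \<le> e2 \<longrightarrow> y + t *\<^sub>R w \<in> U"
        using near_line[OF oU _ w0, of y] y by blast
      define ep where "ep = min e1 e2"
      have ep: "ep > 0" using e1 e2 by (simp add: ep_def)
      define p where "p = x + ep *\<^sub>R w"
      define q where "q = y + ep *\<^sub>R w"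
      have pU: "p \<in> U" using e1 ep unfolding p_def ep_def by auto
      have qU: "q \<in> U" using e2 ep unfolding q_def ep_def by auto
      have s00: "s0 \<noteq> 0" using s0 z x by auto
      have s01: "s0 \<noteq> 1" using s0 z y by auto
      have seg1: "closed_segment x p \<subseteq> U - L"
      proof
        fix v assume v: "v \<in> closed_segment x p"
        hence vU: "v \<in> U" using x pU cU closed_segment_subset by blast
        from v obtain u where u: "v = (1 - u) *\<^sub>R x + u *\<^sub>R p" unfolding closed_segment_def by blast
        have "v = 1 *\<^sub>R x + (u * ep) *\<^sub>R w" unfolding u p_def by (simp add: algebra_simps)
        hence "v \<notin> L" using good by (metis one_neq_zero)
        thus "v \<in> U - L" using vU by blast
      qed
      have seg2: "closed_segment p q \<subseteq> U - L"
      proof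
        fix v assume v: "v \<in> closed_segment p q"
        hence vU: "v \<in> U" using qU pU cU closed_segment_subset by blast
        from v obtain u where u: "v = (1 - u) *\<^sub>R p + u *\<^sub>R q" unfolding closed_segment_def by blast
        have "v \<notin> L"
        proof
          assume "v \<in> L"
          hence "s0 *\<^sub>R v - u *\<^sub>R z \<in> L" using z L by (intro subspace_diff subspace_scale) auto
          moreover have "s0 *\<^sub>R v - u *\<^sub>R z = (s0 - u) *\<^sub>R x + (s0 * ep) *\<^sub>R w"
            unfolding u s0(3) p_def q_def by (simp add: algebra_simps)
          ultimately have "s0 * ep = 0" using good by metis
          thus False using s00 ep by simp
        qed
        thus "v \<in> U - L" using vU by blast
      qed
      have seg3: "closed_segment q y \<subseteq> U - L"
      proof
        fix v assume v: "v \<in> closed_segment q y"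
        hence vU: "v \<in> U" using qU y cU closed_segment_subset by blast
        from v obtain u where u: "v = (1 - u) *\<^sub>R q + u *\<^sub>R y" unfolding closed_segment_def by blast
        have "v \<notin> L"
        proof
          assume "v \<in> L"
          hence "s0 *\<^sub>R v - z \<in> L" using z L by (intro subspace_diff subspace_scale) auto
          moreover have "s0 *\<^sub>R v - z = (s0 - 1) *\<^sub>R x + (s0 * ((1 - u) * ep)) *\<^sub>R w"
            unfolding u s0(3) q_def by (simp add: algebra_simps)
          ultimately have "s0 - 1 = 0" using good by metis
          thus False using s01 by simp
        qed
        thus "v \<in> U - L" using vU by blast
      qed
      show ?thesis
        using path_component_linepath[OF seg1] path_component_linepath[OF seg2]
          path_component_linepath[OF seg3] path_component_trans by metis
    qed
  qed
qed


theorem lemma1: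
  fixes sc :: "complex \<Rightarrow> 'b::real_normed_vector \<Rightarrow> 'b"
  shows "(\<forall>(U::'a::real_normed_vector set) L.
            \<not> fin_dim ((*\<^sub>R) :: real \<Rightarrow> 'a \<Rightarrow> 'a) \<and> convex U \<and> open U \<and> U \<noteq> {}
            \<and> subspace L \<and> codim_ge2 ((*\<^sub>R) :: real \<Rightarrow> 'a \<Rightarrow> 'a) L
            \<longrightarrow> U \<subseteq> closure (U - L) \<and> path_connected (U - L))
       \<and> (normed_scaling sc \<longrightarrow>
          (\<forall>(U::'b set) L.
            \<not> fin_dim sc \<and> convex U \<and> open U \<and> U \<noteq> {}
            \<and> module.subspace sc L \<and> codim_ge2 sc L
            \<longrightarrow> U \<subseteq> closure (U - L) \<and> path_connected (U - L)))"
proof (rule conjI; (intro allI impI)?)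
  fix U L :: "'a set"
  assume h: "\<not> fin_dim ((*\<^sub>R) :: real \<Rightarrow> 'a \<Rightarrow> 'a) \<and> convex U \<and> open U \<and> U \<noteq> {}
            \<and> subspace L \<and> codim_ge2 ((*\<^sub>R) :: real \<Rightarrow> 'a \<Rightarrow> 'a) L"
  have vs: "vector_space ((*\<^sub>R) :: real \<Rightarrow> 'a \<Rightarrow> 'a)"
    by (rule real_vector.vector_space_axioms)
  obtain b1 b2 where "\<forall>c1 c2. c1 *\<^sub>R b1 + c2 *\<^sub>R b2 \<in> L \<longrightarrow> c1 = 0 \<and> c2 = 0"
    using codim_pair[OF vs] h by blast
  thus "U \<subseteq> closure (U - L) \<and> path_connected (U - L)" using core h by blast
next
  fix U L :: "'b set"
  assume ns: "normed_scaling sc" and h: "\<not> fin_dim sc \<and> convex U \<and> open U \<and> U \<noteq> {}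
            \<and> module.subspace sc L \<and> codim_ge2 sc L"
  have vs: "vector_space sc" and ofr: "\<And>r x. sc (of_real r) x = r *\<^sub>R x"
    using ns unfolding normed_scaling_def by auto
  interpret vector_space sc by (rule vs)
  have msub: "module.subspace sc L" using h by blast
  have sub: "Real_Vector_Spaces.subspace L"
    unfolding Real_Vector_Spaces.subspace_def
  proof (intro conjI ballI allI)
    show "0 \<in> L" using msub subspace_0 by blast
    show "x + y \<in> L" if "x \<in> L" "y \<in> L" for x y using msub that subspace_add by blast
    show "c *\<^sub>R x \<in> L" if "x \<in> L" for c x using msub that subspace_scale ofr by metis
  qed
  obtain b1 b2 where p: "\<forall>c1 c2. sc c1 b1 + sc c2 b2 \<in> L \<longrightarrow> c1 = 0 \<and> c2 = 0"
    using codim_pair[OF vs] h by blast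
  have "\<forall>c1 c2. c1 *\<^sub>R b1 + c2 *\<^sub>R b2 \<in> L \<longrightarrow> c1 = 0 \<and> c2 = 0"
  proof (intro allI impI)
    fix c1 c2 :: real assume "c1 *\<^sub>R b1 + c2 *\<^sub>R b2 \<in> L"
    hence "sc (of_real c1) b1 + sc (of_real c2) b2 \<in> L" by (simp add: ofr)
    hence "complex_of_real c1 = 0 \<and> complex_of_real c2 = 0" using p by blast
    thus "c1 = 0 \<and> c2 = 0" by simp
  qed
  thus "U \<subseteq> closure (U - L) \<and> path_connected (U - L)" using core sub h by blast
qed

end
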